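(* Let $\varepsilon>0$, $m\in\mathbb{N}$ and $K,T>0$ with $T\ge K$. Let $A,B\in\mathbb{Z}$ with $A\neq 0$. Then \[ \sum_{\substack{ |k| \leq K \\ (Ak+B, m ) \leq T }} (Ak+B,m) \ll_\varepsilon m^\varepsilon (A,m)\, T, \] where $k$ ranges over integers.
   Context: $(u,v)$ denotes the greatest common divisor. *)

theory Defs
  imports Complex_Main
begin

end

theory Submission
  imports Defs "HOL-Computational_Algebra.Primes"
begin


definition dcnt :: "nat \<Rightarrow> nat" where "dcnt n = card {d. d dvd n}"

lemma dcnt_step:
  fixes p m a :: nat
  assumes p: "prime p" and nd: "\<not> p dvd m" and m: "m > 0"
  shows "dcnt (p ^ a * m) \<le> (a + 1) * dcnt m"
proof -
  have sub: "{d. d dvd p ^ a * m} \<subseteq> (\<lambda>(i, e). p ^ i * e) ` ({..a} \<times> {e. e dvd m})"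
  proof
    fix d assume "d \<in> {d. d dvd p ^ a * m}"
    hence dd: "d dvd p ^ a * m" by simp
    have "p ^ a * m \<noteq> 0" using m prime_gt_0_nat[OF p] by simp
    hence d0: "d \<noteq> 0" using dd by (cases "d = 0") simp_all
    obtain e where de: "d = p ^ multiplicity p d * e" and ne: "\<not> p dvd e"
      using d0 by (rule multiplicity_decompose'[of d p]) (use p not_prime_unit in blast)+
    have cop: "coprime e (p ^ a)" using ne p
      using prime_imp_coprime[OF p ne] by (simp add: coprime_commute)
    have "e dvd d" using de dvd_triv_right by metis
    hence "e dvd p ^ a * m" using dd by (rule dvd_trans)
    hence em: "e dvd m" using cop by (simp add: coprime_dvd_mult_right_iff)
    have ma: "multiplicity p (p ^ a * m) = a"
      using multiplicity_decomposeI[of "p ^ a * m" p a m] nd p by (simp add: prime_gt_0_nat)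
    have "multiplicity p d \<le> multiplicity p (p ^ a * m)"
      using dd d0 m p by (intro dvd_imp_multiplicity_le) (auto simp: prime_gt_0_nat)
    hence "multiplicity p d \<le> a" using ma by simp
    thus "d \<in> (\<lambda>(i, e). p ^ i * e) ` ({..a} \<times> {e. e dvd m})"
      using de em by (auto intro!: image_eqI[where x="(multiplicity p d, e)"])
  qed
  have fin: "finite ({..a} \<times> {e. e dvd m})" using m by auto
  have "card {d. d dvd p ^ a * m} \<le> card ((\<lambda>(i, e). p ^ i * e) ` ({..a} \<times> {e. e dvd m}))"
    by (rule card_mono) (use fin sub in auto)
  also have "\<dots> \<le> card ({..a} \<times> {e. e dvd m})" by (rule card_image_le[OF fin])
  also have "\<dots> = (a + 1) * card {e. e dvd m}" by (simp add: card_cartesian_product)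
  finally show ?thesis by (simp add: dcnt_def)
qed

lemma two_pow_ge: "real a + 1 \<le> 2 ^ a"
  by (induction a) auto

lemma num1:
  fixes \<epsilon> c :: real and p a :: nat
  assumes e: "\<epsilon> > 0" and c: "c = 1 + 1 / (\<epsilon> * ln 2)" and p: "p \<ge> 2"
  shows "real a + 1 \<le> c * real p powr (real a * \<epsilon>)"
proof -
  have l2: "ln (2::real) > 0" by simp
  have "1 + real a * \<epsilon> * ln 2 \<le> exp (real a * \<epsilon> * ln 2)" by (rule exp_ge_add_one_self)
  also have "\<dots> = 2 powr (real a * \<epsilon>)" by (simp add: powr_def)
  also have "\<dots> \<le> real p powr (real a * \<epsilon>)" using p e by (intro powr_mono2) auto
  finally have h: "1 + real a * \<epsilon> * ln 2 \<le> real p powr (real a * \<epsilon>)" .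
  have c1: "c \<ge> 1" using c e l2 by simp
  have ce: "c * (\<epsilon> * ln 2) = \<epsilon> * ln 2 + 1"
    using c e l2 by (simp add: field_simps)
  have "c * (1 + real a * \<epsilon> * ln 2) = c + real a * (c * (\<epsilon> * ln 2))"
    by (simp add: algebra_simps)
  also have "\<dots> = c + real a * (\<epsilon> * ln 2 + 1)" using ce by simp
  finally have "c * (1 + real a * \<epsilon> * ln 2) = c + real a * (\<epsilon> * ln 2 + 1)" .
  moreover have "real a * (\<epsilon> * ln 2) \<ge> 0" using e l2 by simp
  ultimately have "real a + 1 \<le> c * (1 + real a * \<epsilon> * ln 2)" using c1
    by (simp add: algebra_simps)
  also have "\<dots> \<le> c * real p powr (real a * \<epsilon>)" using h c1 by (intro mult_left_mono) auto
  finally show ?thesis .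
qed

lemma num2:
  fixes \<epsilon> :: real and p a M :: nat
  assumes e: "\<epsilon> > 0" and M: "M = nat \<lceil>2 powr (1 / \<epsilon>)\<rceil>" and p: "p \<ge> M"
  shows "real a + 1 \<le> real p powr (real a * \<epsilon>)"
proof -
  have p0: "2 powr (1 / \<epsilon>) > (0::real)" by simp
  have c0: "0 \<le> \<lceil>2 powr (1 / \<epsilon>)\<rceil>" unfolding zero_le_ceiling using p0 by linarith
  have "2 powr (1 / \<epsilon>) \<le> real_of_int \<lceil>2 powr (1 / \<epsilon>)\<rceil>" by (rule le_of_int_ceiling)
  also have "\<dots> = real M" using M c0 by simp
  also have "\<dots> \<le> real p" using p by simp
  finally have pM: "2 powr (1 / \<epsilon>) \<le> real p" .
  have "2 powr (1 / \<epsilon>) > (0::real)" by simp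
  hence pp: "real p > 0" using pM by linarith
  have "2 = (2 powr (1 / \<epsilon>)) powr \<epsilon>" using e by (simp add: powr_powr)
  also have "\<dots> \<le> real p powr \<epsilon>" using pM e by (intro powr_mono2) auto
  finally have h2: "2 \<le> real p powr \<epsilon>" .
  have "real a + 1 \<le> 2 ^ a" by (rule two_pow_ge)
  also have "\<dots> \<le> (real p powr \<epsilon>) ^ a" using h2 by (intro power_mono) auto
  also have "\<dots> = (real p powr \<epsilon>) powr (real a)" using pp by (simp add: powr_realpow)
  also have "\<dots> = real p powr (real a * \<epsilon>)" by (simp add: powr_powr mult.commute)
  finally show ?thesis .
qed

lemma dcnt_aux:
  fixes \<epsilon> c :: real and M :: nat
  assumes e: "\<epsilon> > 0" and c: "c = 1 + 1 / (\<epsilon> * ln 2)" and M: "M = nat \<lceil>2 powr (1 / \<epsilon>)\<rceil>"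
  shows "n > 0 \<Longrightarrow> real (dcnt n) \<le> c ^ card {p. prime p \<and> p dvd n \<and> p < M} * real n powr \<epsilon>"
proof (induction n rule: less_induct)
  case (less n)
  have c1: "c \<ge> 1" using c e by simp
  show ?case
  proof (cases "n = 1")
    case True
    have "{d::nat. d dvd 1} = {1}" by auto
    hence "dcnt n = 1" using True by (simp add: dcnt_def)
    moreover have E: "{p. prime p \<and> p dvd n \<and> p < M} = {}" using True by auto
    ultimately show ?thesis unfolding E using True by simp
  next
    case False
    then obtain p where p: "prime p" and pn: "p dvd n" using prime_factor_nat by blast
    define a where "a = multiplicity p n"
    define m where "m = n div p ^ a"
    have nm: "n = p ^ a * m" unfolding m_def a_def by (simp add: multiplicity_dvd)
    have nd: "\<not> p dvd m" unfolding m_def a_def by (rule multiplicity_decompose) (use less.prems p not_prime_unit in auto)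
    have a1: "a \<ge> 1" unfolding a_def using p pn less.prems
      by (simp add: prime_multiplicity_gt_zero_iff Suc_le_eq)
    have m0: "m > 0" using nm less.prems by (cases "m = 0") auto
    have p2: "p \<ge> 2" using p by (rule prime_ge_2_nat)
    have "p ^ a \<ge> p ^ 1" using a1 p2 by (intro power_increasing) auto
    hence "p ^ a \<ge> 2" using p2 by simp
    hence "2 * m \<le> p ^ a * m" by (rule mult_le_mono1)
    hence "2 * m \<le> n" using nm by simp
    hence mn: "m < n" using m0 by linarith
    have IH: "real (dcnt m) \<le> c ^ card {q. prime q \<and> q dvd m \<and> q < M} * real m powr \<epsilon>"
      using less.IH[OF mn m0] .
    have step: "real (dcnt n) \<le> (real a + 1) * real (dcnt m)"
    proof -
      have "dcnt n \<le> (a + 1) * dcnt m" using dcnt_step[OF p nd m0, of a] nm by simp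
      hence "real (dcnt n) \<le> real ((a + 1) * dcnt m)" by (simp only: of_nat_le_iff)
      thus ?thesis by (simp add: algebra_simps)
    qed
    let ?Pm = "{q. prime q \<and> q dvd m \<and> q < M}"
    let ?Pn = "{q. prime q \<and> q dvd n \<and> q < M}"
    have finPm: "finite ?Pm" by (rule finite_subset[of _ "{..<M}"]) auto
    have pPm: "p \<notin> ?Pm" using nd by auto
    have dvdiff: "q dvd n \<longleftrightarrow> q = p \<or> q dvd m" if "prime q" for q
    proof -
      have "q dvd n \<longleftrightarrow> q dvd p ^ a \<or> q dvd m" using nm that by (simp add: prime_dvd_mult_iff)
      also have "q dvd p ^ a \<longleftrightarrow> q = p" using that p a1
        by (auto simp: prime_dvd_power_iff dest: primes_dvd_imp_eq)
      finally show ?thesis .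
    qed
    have npow: "real n powr \<epsilon> = real p powr (real a * \<epsilon>) * real m powr \<epsilon>"
    proof -
      have "real n = real p powr real a * real m" using nm p2 by (simp add: powr_realpow)
      hence "real n powr \<epsilon> = (real p powr real a) powr \<epsilon> * real m powr \<epsilon>"
        by (simp add: powr_mult)
      thus ?thesis by (simp add: powr_powr)
    qed
    have mpos: "real m powr \<epsilon> \<ge> 0" by simp
    have cpos: "c ^ card ?Pm \<ge> 0" using c1 by simp
    have st1: "real (dcnt n) \<le> (real a + 1) * (c ^ card ?Pm * real m powr \<epsilon>)"
    proof -
      have "(real a + 1) * real (dcnt m) \<le> (real a + 1) * (c ^ card ?Pm * real m powr \<epsilon>)"
        using IH by (intro mult_left_mono) auto
      thus ?thesis using step by linarith
    qed
    show ?thesis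
    proof (cases "p < M")
      case True
      have Pn: "?Pn = insert p ?Pm"
      proof (rule set_eqI)
        fix q show "q \<in> ?Pn \<longleftrightarrow> q \<in> insert p ?Pm" using dvdiff[of q] p True by auto
      qed
      hence cardn: "card ?Pn = Suc (card ?Pm)" using finPm pPm by simp
      note st1
      also have "(real a + 1) * (c ^ card ?Pm * real m powr \<epsilon>) \<le> (c * real p powr (real a * \<epsilon>)) * (c ^ card ?Pm * real m powr \<epsilon>)"
        using num1[OF e c p2, of a] mpos cpos by (intro mult_right_mono) auto
      also have "\<dots> = c ^ Suc (card ?Pm) * (real p powr (real a * \<epsilon>) * real m powr \<epsilon>)"
        by (simp add: algebra_simps)
      also have "\<dots> = c ^ card ?Pn * real n powr \<epsilon>" by (simp only: cardn npow)
      finally show ?thesis .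
    next
      case False
      have Pn: "?Pn = ?Pm"
      proof (rule set_eqI)
        fix q show "q \<in> ?Pn \<longleftrightarrow> q \<in> ?Pm" using dvdiff[of q] p False by auto
      qed
      note st1
      also have "(real a + 1) * (c ^ card ?Pm * real m powr \<epsilon>) \<le> (real p powr (real a * \<epsilon>)) * (c ^ card ?Pm * real m powr \<epsilon>)"
        using num2[OF e M, of p a] False mpos cpos by (intro mult_right_mono) auto
      also have "\<dots> = c ^ card ?Pm * (real p powr (real a * \<epsilon>) * real m powr \<epsilon>)"
        by (simp add: algebra_simps)
      also have "\<dots> = c ^ card ?Pn * real n powr \<epsilon>" by (simp only: Pn npow)
      finally show ?thesis .
    qed
  qed
qed

lemma divisor_bound:
  fixes \<epsilon> :: real
  assumes e: "\<epsilon> > 0"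
  shows "\<exists>C>0. \<forall>n>0. real (dcnt n) \<le> C * real n powr \<epsilon>"
proof -
  define c where "c = 1 + 1 / (\<epsilon> * ln 2)"
  define M where "M = nat \<lceil>2 powr (1 / \<epsilon>)\<rceil>"
  have c1: "c \<ge> 1" using e by (simp add: c_def)
  show ?thesis
  proof (intro exI[of _ "c ^ M"] conjI allI impI)
    show "c ^ M > 0" using c1 by simp
    fix n :: nat assume n: "n > 0"
    let ?P = "{p. prime p \<and> p dvd n \<and> p < M}"
    have "card ?P \<le> card {..<M}" by (rule card_mono) auto
    hence cP: "card ?P \<le> M" by simp
    have "real (dcnt n) \<le> c ^ card ?P * real n powr \<epsilon>"
      using dcnt_aux[OF e c_def M_def n] .
    also have "\<dots> \<le> c ^ M * real n powr \<epsilon>"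
      using c1 cP by (intro mult_right_mono power_increasing) auto
    finally show "real (dcnt n) \<le> c ^ M * real n powr \<epsilon>" .
  qed
qed



lemma finite_bounded_int:
  fixes K :: real and P :: "int \<Rightarrow> bool"
  shows "finite {k::int. \<bar>real_of_int k\<bar> \<le> K \<and> P k}"
proof (rule finite_subset[of _ "{-\<lceil>K\<rceil>..\<lceil>K\<rceil>}"])
  show "{k::int. \<bar>real_of_int k\<bar> \<le> K \<and> P k} \<subseteq> {-\<lceil>K\<rceil>..\<lceil>K\<rceil>}"
  proof
    fix k assume "k \<in> {k::int. \<bar>real_of_int k\<bar> \<le> K \<and> P k}"
    hence h: "\<bar>real_of_int k\<bar> \<le> K" by simp
    have "real_of_int k \<le> real_of_int \<lceil>K\<rceil>" using h le_of_int_ceiling[of K] by linarith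
    hence a: "k \<le> \<lceil>K\<rceil>" by (simp only: of_int_le_iff)
    have hk: "- real_of_int k \<le> K" using h by linarith
    have "real_of_int (- k) \<le> real_of_int \<lceil>K\<rceil>" by (metis hk le_of_int_ceiling of_int_minus order_trans)
    hence "- k \<le> \<lceil>K\<rceil>" by (simp only: of_int_le_iff)
    thus "k \<in> {-\<lceil>K\<rceil>..\<lceil>K\<rceil>}" using a by simp
  qed
qed simp

lemma count_ap:
  fixes A B d :: int and K :: real
  assumes d: "d > 0" and K: "K > 0"
  shows "real (card {k::int. \<bar>real_of_int k\<bar> \<le> K \<and> d dvd A * k + B})
           \<le> 2 * K * real_of_int (gcd A d) / real_of_int d + 1"
proof -
  define g where "g = gcd A d"
  define q where "q = d div g"
  have g0: "g > 0" using d by (simp add: g_def)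
  have dq: "d = g * q" by (simp add: g_def q_def)
  have q0: "q > 0" using d g0 dq by (metis zero_less_mult_pos)
  have cop: "coprime q (A div g)" unfolding q_def g_def using d
    by (metis coprime_commute div_gcd_coprime less_irrefl)
  have Ag: "A = g * (A div g)" by (simp add: g_def)
  define X where "X = {k::int. \<bar>real_of_int k\<bar> \<le> K \<and> d dvd A * k + B}"
  have finX: "finite X" unfolding X_def by (rule finite_bounded_int)
  have diff: "q dvd k1 - k2" if "k1 \<in> X" "k2 \<in> X" for k1 k2
  proof -
    have "d dvd (A * k1 + B) - (A * k2 + B)" using that by (intro dvd_diff) (auto simp: X_def)
    hence "d dvd A * (k1 - k2)" by (simp add: algebra_simps)
    hence "g * q dvd g * ((A div g) * (k1 - k2))" using dq Ag by (metis mult.assoc)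
    hence "q dvd (A div g) * (k1 - k2)" using g0 by simp
    thus ?thesis using cop by (simp add: coprime_dvd_mult_right_iff)
  qed
  have rq: "real_of_int d = real_of_int g * real_of_int q" using dq by simp
  have frac: "2 * K / real_of_int q = 2 * K * real_of_int g / real_of_int d"
    using rq g0 q0 by (simp add: field_simps)
  have nonneg: "2 * K / real_of_int q \<ge> 0" using K q0 by simp
  show ?thesis
  proof (cases "X = {}")
    case True
    thus ?thesis unfolding g_def[symmetric] X_def[symmetric] using nonneg frac by simp
  next
    case False
    define k0 where "k0 = Min X"
    have k0X: "k0 \<in> X" using finX False by (simp add: k0_def)
    have k0le: "k0 \<le> k" if "k \<in> X" for k using finX that by (simp add: k0_def)
    define N where "N = \<lfloor>2 * K / real_of_int q\<rfloor>"
    have N0: "N \<ge> 0" using nonneg by (simp add: N_def)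
    have sub: "X \<subseteq> (\<lambda>j. k0 + q * j) ` {0..N}"
    proof
      fix k assume kX: "k \<in> X"
      define j where "j = (k - k0) div q"
      have kj: "k - k0 = q * j" using diff[OF kX k0X] by (simp add: j_def)
      have "q * j \<ge> 0" using kj k0le[OF kX] by simp
      hence j0: "j \<ge> 0" using q0 by (simp add: zero_le_mult_iff)
      have "\<bar>real_of_int k\<bar> \<le> K" "\<bar>real_of_int k0\<bar> \<le> K" using kX k0X by (auto simp: X_def)
      hence "real_of_int (q * j) \<le> 2 * K" using kj
        by (metis (no_types, opaque_lifting) abs_le_iff of_int_diff mult_2 add_mono diff_le_eq add.commute diff_conv_add_uminus)
      hence "real_of_int q * real_of_int j \<le> 2 * K" by simp
      hence "real_of_int j \<le> 2 * K / real_of_int q" using q0 by (simp add: field_simps)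
      hence "j \<le> N" unfolding N_def by (simp add: le_floor_iff)
      thus "k \<in> (\<lambda>j. k0 + q * j) ` {0..N}" using j0 kj by (intro image_eqI[of _ _ j]) auto
    qed
    have "card X \<le> card ((\<lambda>j. k0 + q * j) ` {0..N})" by (rule card_mono[OF _ sub]) simp
    also have "\<dots> \<le> card {0..N}" by (rule card_image_le) simp
    also have "\<dots> = nat (N + 1)" by simp
    finally have "real (card X) \<le> real (nat (N + 1))" by (simp only: of_nat_le_iff)
    also have "\<dots> = real_of_int N + 1" using N0 by simp
    also have "\<dots> \<le> 2 * K / real_of_int q + 1" unfolding N_def by simp
    finally show ?thesis using frac unfolding g_def[symmetric] X_def[symmetric] by simp
  qed
qed


theorem lemma15:
  shows "\<forall>\<epsilon>::real. \<epsilon> > 0 \<longrightarrow> (\<exists>C::real. C > 0 \<and>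
    (\<forall>(m::nat) (K::real) (T::real) (A::int) (B::int).
       m \<ge> 1 \<and> K > 0 \<and> T > 0 \<and> T \<ge> K \<and> A \<noteq> 0 \<longrightarrow>
       (\<Sum>k\<in>{k::int. \<bar>real_of_int k\<bar> \<le> K \<and> real_of_int (gcd (A * k + B) (int m)) \<le> T}.
          real_of_int (gcd (A * k + B) (int m)))
       \<le> C * real m powr \<epsilon> * real_of_int (gcd A (int m)) * T))"
proof (intro allI impI)
  fix \<epsilon> :: real assume e: "\<epsilon> > 0"
  obtain C0 where C0: "C0 > 0" and C0b: "\<And>n. n > 0 \<Longrightarrow> real (dcnt n) \<le> C0 * real n powr \<epsilon>"
    using divisor_bound[OF e] by blast
  show "\<exists>C::real. C > 0 \<and>
    (\<forall>(m::nat) (K::real) (T::real) (A::int) (B::int).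
       m \<ge> 1 \<and> K > 0 \<and> T > 0 \<and> T \<ge> K \<and> A \<noteq> 0 \<longrightarrow>
       (\<Sum>k\<in>{k::int. \<bar>real_of_int k\<bar> \<le> K \<and> real_of_int (gcd (A * k + B) (int m)) \<le> T}.
          real_of_int (gcd (A * k + B) (int m)))
       \<le> C * real m powr \<epsilon> * real_of_int (gcd A (int m)) * T)"
  proof (intro exI[of _ "3 * C0"] conjI allI impI)
    show "3 * C0 > 0" using C0 by simp
    fix m :: nat and K T :: real and A B :: int
    assume H: "m \<ge> 1 \<and> K > 0 \<and> T > 0 \<and> T \<ge> K \<and> A \<noteq> 0"
    hence m1: "m \<ge> 1" and K0: "K > 0" and T0: "T > 0" and TK: "T \<ge> K" by auto
    define G where "G = gcd A (int m)"
    define g where "g = (\<lambda>k. gcd (A * k + B) (int m))"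
    define S where "S = {k::int. \<bar>real_of_int k\<bar> \<le> K \<and> real_of_int (g k) \<le> T}"
    have finS: "finite S" unfolding S_def by (rule finite_bounded_int)
    have G1: "G \<ge> 1" using m1 unfolding G_def
      by (metis gcd_pos_int int_one_le_iff_zero_less not_one_le_zero of_nat_0_less_iff zero_less_iff_neq_zero)
    have inner: "(\<Sum>k\<in>{k \<in> S. g k = d}. real_of_int (g k)) \<le> 3 * T * real_of_int G"
      if dS: "d \<in> g ` S" for d
    proof -
      obtain k1 where k1: "k1 \<in> S" "d = g k1" using dS by blast
      have dpos: "d > 0" using k1 m1 unfolding g_def by simp
      have ddvd: "d dvd int m" using k1 unfolding g_def by simp
      have dT: "real_of_int d \<le> T" using k1 unfolding S_def by simp
      define X where "X = {k::int. \<bar>real_of_int k\<bar> \<le> K \<and> d dvd A * k + B}"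
      have finX: "finite X" unfolding X_def by (rule finite_bounded_int)
      have subX: "{k \<in> S. g k = d} \<subseteq> X" unfolding X_def S_def g_def by auto
      have "(\<Sum>k\<in>{k \<in> S. g k = d}. real_of_int (g k)) = (\<Sum>k\<in>{k \<in> S. g k = d}. real_of_int d)"
        by (rule sum.cong) auto
      also have "\<dots> = real (card {k \<in> S. g k = d}) * real_of_int d" by simp
      also have "\<dots> \<le> real (card X) * real_of_int d"
        using card_mono[OF finX subX] dpos by (intro mult_right_mono) auto
      also have "\<dots> \<le> (2 * K * real_of_int (gcd A d) / real_of_int d + 1) * real_of_int d"
        using count_ap[OF dpos K0, of A B] dpos unfolding X_def by (intro mult_right_mono) auto
      also have "\<dots> = 2 * K * real_of_int (gcd A d) + real_of_int d"
        using dpos by (simp add: field_simps)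
      also have "\<dots> \<le> 2 * T * real_of_int G + T * real_of_int G"
      proof -
        have "gcd A d dvd G" unfolding G_def using ddvd by (meson dvd_trans gcd_dvd1 gcd_dvd2 gcd_greatest)
        hence "gcd A d \<le> G" using G1 by (intro zdvd_imp_le) auto
        hence a: "real_of_int (gcd A d) \<le> real_of_int G" by (simp only: of_int_le_iff)
        have "2 * K * real_of_int (gcd A d) \<le> 2 * T * real_of_int G"
          using a TK K0 by (intro mult_mono) auto
        moreover have "real_of_int d \<le> T * real_of_int G"
          using dT G1 T0 by (metis mult.right_neutral mult_left_mono of_int_1_le_iff less_imp_le order_trans)
        ultimately show ?thesis by linarith
      qed
      also have "\<dots> = 3 * T * real_of_int G" by simp
      finally show ?thesis .
    qed
    have cardS: "card (g ` S) \<le> dcnt m"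
    proof -
      have sub: "g ` S \<subseteq> int ` {d. d dvd m}"
      proof
        fix x assume "x \<in> g ` S"
        then obtain k where x: "x = g k" by blast
        have x0: "x \<ge> 0" using x unfolding g_def by simp
        have xm: "x dvd int m" using x unfolding g_def by simp
        have xe: "x = int (nat x)" using x0 by simp
        have "int (nat x) dvd int m" using xm xe by simp
        hence "nat x dvd m" by (simp only: int_dvd_int_iff)
        note this xe
        thus "x \<in> int ` {d. d dvd m}" by blast
      qed
      have fin: "finite {d. d dvd m}" using m1 by simp
      have "card (g ` S) \<le> card (int ` {d. d dvd m})" by (rule card_mono[OF _ sub]) (use fin in simp)
      also have "\<dots> \<le> card {d. d dvd m}" by (rule card_image_le[OF fin])
      finally show ?thesis by (simp add: dcnt_def)
    qed
    have "(\<Sum>k\<in>S. real_of_int (g k)) = (\<Sum>d\<in>g ` S. \<Sum>k\<in>{k \<in> S. g k = d}. real_of_int (g k))"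
      by (rule sum.image_gen[OF finS])
    also have "\<dots> \<le> (\<Sum>d\<in>g ` S. 3 * T * real_of_int G)" by (rule sum_mono) (rule inner)
    also have "\<dots> = real (card (g ` S)) * (3 * T * real_of_int G)" by simp
    also have "\<dots> \<le> real (dcnt m) * (3 * T * real_of_int G)"
      using cardS T0 G1 by (intro mult_right_mono) auto
    also have "\<dots> \<le> (C0 * real m powr \<epsilon>) * (3 * T * real_of_int G)"
      using C0b[of m] m1 T0 G1 by (intro mult_right_mono) auto
    also have "\<dots> = 3 * C0 * real m powr \<epsilon> * real_of_int G * T" by (simp add: algebra_simps)
    finally show "(\<Sum>k\<in>{k::int. \<bar>real_of_int k\<bar> \<le> K \<and> real_of_int (gcd (A * k + B) (int m)) \<le> T}.
          real_of_int (gcd (A * k + B) (int m)))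
       \<le> 3 * C0 * real m powr \<epsilon> * real_of_int (gcd A (int m)) * T"
      unfolding S_def g_def G_def .
  qed
qed

end
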